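(* Let $f=\frac1{1-X}\in GF(2)[[X]]$, and for $h\in GF(2)[[X]]$ let $\alpha[h]:g\mapsto h+g$ and $\mu[h]:g\mapsto hg$. Let $\Gamma$ be the group of bijections of $GF(2)[[X]]$ generated by the maps $g\mapsto f\cdot(s+g)$, $s\in\{0,1\}$, and let $N$ be the subgroup generated by $\{\alpha[sf^m]\mid s\in GF(2),\ m\in\mathbb{Z}\}$. Then $N$ is a normal subgroup of $\Gamma$.
   Context: Under the identification of $\{0,1\}^\omega$ with $GF(2)[[X]]$ via $(a_k)\mapsto\sum a_kX^k$, $\Gamma$ is the automaton group $\Gamma(\mathcal{M}_2)$ of the two-state Mealy machine over $\{0,1\}$ in which state $s$, reading $r$, outputs $s+r\bmod 2$ and moves to state $s+r\bmod 2$. *)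

theory Defs
  imports "HOL-Library.Z2" "HOL-Computational_Algebra.Formal_Power_Series" "HOL-Algebra.Bij" "HOL-Algebra.Generated_Groups"
begin

type_synonym gf2fps = "bit fps"

definition fM :: gf2fps where "fM = inverse (1 - fps_X)"

definition fpow :: "int \<Rightarrow> gf2fps" where
  "fpow m = (if 0 \<le> m then fM ^ nat m else (1 - fps_X) ^ nat (- m))"

definition alphaM :: "gf2fps \<Rightarrow> gf2fps \<Rightarrow> gf2fps" where "alphaM h = (\<lambda>g. h + g)"
definition muM :: "gf2fps \<Rightarrow> gf2fps \<Rightarrow> gf2fps" where "muM h = (\<lambda>g. h * g)"

definition GammaGens :: "(gf2fps \<Rightarrow> gf2fps) set" where
  "GammaGens = {(\<lambda>g. fM * (fps_const s + g)) | s :: bit. True}"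

definition Gamma :: "(gf2fps \<Rightarrow> gf2fps) set" where
  "Gamma = generate (BijGroup (UNIV :: gf2fps set)) GammaGens"

definition NGens :: "(gf2fps \<Rightarrow> gf2fps) set" where
  "NGens = {alphaM (fps_const s * fpow m) | (s :: bit) (m :: int). True}"

definition NSub :: "(gf2fps \<Rightarrow> gf2fps) set" where
  "NSub = generate (BijGroup (UNIV :: gf2fps set)) NGens"

end

theory Submission
  imports Defs
begin

lemma (in group) conj_generate:
  assumes c: "c \<in> carrier G" and K: "K \<subseteq> carrier G"
    and gen: "\<And>k. k \<in> K \<Longrightarrow> c \<otimes> k \<otimes> inv c \<in> generate G K"
    and h: "h \<in> generate G K"
  shows "c \<otimes> h \<otimes> inv c \<in> generate G K"
  using h
proof (induction rule: generate.induct)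
  case one
  then show ?case using c by (simp add: generate.one)
next
  case (incl h)
  then show ?case using gen by blast
next
  case (inv h)
  have hc: "h \<in> carrier G" using inv K by blast
  have "c \<otimes> inv h \<otimes> inv c = inv (c \<otimes> h \<otimes> inv c)"
    using c hc by (simp add: inv_mult_group m_assoc)
  moreover have "c \<otimes> h \<otimes> inv c \<in> generate G K"
    using inv gen by blast
  ultimately show ?case using generate_m_inv_closed K by auto
next
  case (eng h1 h2)
  have h1c: "h1 \<in> carrier G" using eng(1) generate_incl K by blast
  have h2c: "h2 \<in> carrier G" using eng(2) generate_incl K by blast
  have "c \<otimes> (h1 \<otimes> h2) \<otimes> inv c = (c \<otimes> h1 \<otimes> inv c) \<otimes> (c \<otimes> h2 \<otimes> inv c)"
  proof -
    have "(c \<otimes> h1 \<otimes> inv c) \<otimes> (c \<otimes> h2 \<otimes> inv c) = c \<otimes> h1 \<otimes> (inv c \<otimes> c) \<otimes> h2 \<otimes> inv c"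
      by (simp only: m_assoc m_closed inv_closed c h1c h2c)
    also have "\<dots> = c \<otimes> (h1 \<otimes> h2) \<otimes> inv c" using c h1c h2c by (simp add: m_assoc)
    finally show ?thesis by simp
  qed
  then show ?case using eng generate.eng by metis
qed

lemma (in group) conj_generate2:
  assumes S: "S \<subseteq> carrier G" and K: "K \<subseteq> carrier G"
    and gen1: "\<And>s k. s \<in> S \<Longrightarrow> k \<in> K \<Longrightarrow> s \<otimes> k \<otimes> inv s \<in> generate G K"
    and gen2: "\<And>s k. s \<in> S \<Longrightarrow> k \<in> K \<Longrightarrow> inv s \<otimes> k \<otimes> s \<in> generate G K"
    and g: "g \<in> generate G S"
  shows "\<forall>h \<in> generate G K. g \<otimes> h \<otimes> inv g \<in> generate G K \<and> inv g \<otimes> h \<otimes> g \<in> generate G K"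
proof -
  have base: "s \<otimes> h \<otimes> inv s \<in> generate G K \<and> inv s \<otimes> h \<otimes> s \<in> generate G K"
    if incl: "s \<in> S" and h: "h \<in> generate G K" for s h
  proof
    have sc: "s \<in> carrier G" using incl S by blast
    show "s \<otimes> h \<otimes> inv s \<in> generate G K"
      by (rule conj_generate[OF sc K _ h]) (use gen1 incl in blast)
    have "inv s \<otimes> h \<otimes> inv (inv s) \<in> generate G K"
      by (rule conj_generate[OF _ K _ h]) (use gen2 incl sc in auto)
    then show "inv s \<otimes> h \<otimes> s \<in> generate G K" using sc by simp
  qed
  show ?thesis
  using g
  proof (induction rule: generate.induct)
  case one
  show ?case
  proof
    fix h assume h: "h \<in> generate G K"
    have "h \<in> carrier G" using h generate_incl K by blast
    then show "\<one> \<otimes> h \<otimes> inv \<one> \<in> generate G K \<and> inv \<one> \<otimes> h \<otimes> \<one> \<in> generate G K"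
      using h by simp
  qed
next
  case (incl s)
  then show ?case using base by blast
next
  case (inv s)
  have sc: "s \<in> carrier G" using inv S by blast
  show ?case
  proof
    fix h assume h: "h \<in> generate G K"
    then show "inv s \<otimes> h \<otimes> inv (inv s) \<in> generate G K \<and> inv (inv s) \<otimes> h \<otimes> inv s \<in> generate G K"
      using base[OF inv h] sc by simp
  qed
next
  case (eng g1 g2)
  have g1c: "g1 \<in> carrier G" using eng(1) generate_incl S by blast
  have g2c: "g2 \<in> carrier G" using eng(2) generate_incl S by blast
  show ?case
  proof
    fix h assume h: "h \<in> generate G K"
    have hc: "h \<in> carrier G" using h generate_incl K by blast
    have e1: "g1 \<otimes> g2 \<otimes> h \<otimes> inv (g1 \<otimes> g2) = g1 \<otimes> (g2 \<otimes> h \<otimes> inv g2) \<otimes> inv g1"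
      using g1c g2c hc by (simp add: m_assoc inv_mult_group)
    have e2: "inv (g1 \<otimes> g2) \<otimes> h \<otimes> (g1 \<otimes> g2) = inv g2 \<otimes> (inv g1 \<otimes> h \<otimes> g1) \<otimes> g2"
      using g1c g2c hc by (simp add: m_assoc inv_mult_group)
    show "g1 \<otimes> g2 \<otimes> h \<otimes> inv (g1 \<otimes> g2) \<in> generate G K \<and>
          inv (g1 \<otimes> g2) \<otimes> h \<otimes> (g1 \<otimes> g2) \<in> generate G K"
      using e1 e2 eng h by auto
  qed
qed
qed


abbreviation BG :: "(gf2fps \<Rightarrow> gf2fps) monoid" where "BG \<equiv> BijGroup (UNIV :: gf2fps set)"

lemma carrier_BG: "carrier BG = {f. bij f}"
  by (simp add: BijGroup_def Bij_def)

lemma mult_BG: "bij f \<Longrightarrow> bij g \<Longrightarrow> f \<otimes>\<^bsub>BG\<^esub> g = f \<circ> g"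
  by (simp add: BijGroup_def Bij_def compose_def restrict_UNIV o_def)

lemma one_BG: "\<one>\<^bsub>BG\<^esub> = id"
  by (simp add: BijGroup_def restrict_UNIV id_def)

lemma inv_BG: "bij f \<Longrightarrow> inv\<^bsub>BG\<^esub> f = inv_into UNIV f"
  by (simp add: inv_BijGroup Bij_def restrict_UNIV)

definition tau :: "bit \<Rightarrow> gf2fps \<Rightarrow> gf2fps" where "tau s = (\<lambda>g. fM * (fps_const s + g))"
definition taui :: "bit \<Rightarrow> gf2fps \<Rightarrow> gf2fps" where "taui s = (\<lambda>g. (1 - fps_X) * g - fps_const s)"

lemma fM_u: "fM * (1 - fps_X) = 1"
  unfolding fM_def by (rule inverse_mult_eq_1) simp

lemma fM_u': "(1 - fps_X) * fM = 1"
  using fM_u by (simp add: mult.commute)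

lemma tau_taui: "tau s \<circ> taui s = id"
proof
  fix g
  have "fM * ((1 - fps_X) * g) = g" by (simp add: mult.assoc[symmetric] fM_u)
  then show "(tau s \<circ> taui s) g = id g" by (simp add: tau_def taui_def)
qed

lemma taui_tau: "taui s \<circ> tau s = id"
proof
  fix g
  have "(1 - fps_X) * (fM * (fps_const s + g)) = fps_const s + g"
    by (metis mult.assoc[symmetric] fM_u' mult_1)
  then show "(taui s \<circ> tau s) g = id g" by (simp only: comp_def tau_def taui_def id_def) simp
qed

lemma bij_tau: "bij (tau s)"
  using tau_taui taui_tau by (metis o_bij)

lemma inv_tau: "inv_into UNIV (tau s) = taui s"
  using tau_taui taui_tau by (rule inv_unique_comp)

lemma bij_alpha: "bij (alphaM h)"
proof (rule o_bij[of "alphaM (- h)"])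
  show "alphaM (- h) \<circ> alphaM h = id" by (auto simp: alphaM_def)
  show "alphaM h \<circ> alphaM (- h) = id" by (auto simp: alphaM_def)
qed

lemma conj1: "tau s \<circ> alphaM h \<circ> taui s = alphaM (fM * h)"
proof
  fix g
  have "fM * (fps_const s + (h + ((1 - fps_X) * g - fps_const s))) = fM * h + (fM * (1 - fps_X)) * g"
    by (simp add: algebra_simps)
  then show "(tau s \<circ> alphaM h \<circ> taui s) g = alphaM (fM * h) g"
    by (simp add: tau_def taui_def alphaM_def fM_u)
qed

lemma conj2: "taui s \<circ> alphaM h \<circ> tau s = alphaM ((1 - fps_X) * h)"
proof
  fix g
  have "(1 - fps_X) * (h + fM * (fps_const s + g)) - fps_const s = (1 - fps_X) * h + (fM * (1 - fps_X)) * (fps_const s + g) - fps_const s"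
    by (simp add: algebra_simps)
  then show "(taui s \<circ> alphaM h \<circ> tau s) g = alphaM ((1 - fps_X) * h) g"
    by (simp add: tau_def taui_def alphaM_def fM_u)
qed

lemma fpow_up: "fM * fpow m = fpow (m + 1)"
proof (cases "0 \<le> m")
  case True
  then have "nat (m + 1) = Suc (nat m)" by simp
  then show ?thesis using True by (simp add: fpow_def)
next
  case False
  show ?thesis
  proof (cases "m = -1")
    case True
    then show ?thesis by (simp add: fpow_def fM_u)
  next
    case False2: False
    have e: "nat (- m) = Suc (nat (- (m + 1)))" using False False2 by simp
    have "fM * (1 - fps_X) ^ nat (- m) = (fM * (1 - fps_X)) * (1 - fps_X) ^ nat (- (m + 1))"
      unfolding e by (simp add: mult.assoc)
    then show ?thesis using False False2 by (simp add: fpow_def fM_u)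
  qed
qed

lemma fpow_down: "(1 - fps_X) * fpow m = fpow (m - 1)"
proof -
  have "fpow m = fM * fpow (m - 1)" using fpow_up[of "m - 1"] by simp
  then have "(1 - fps_X) * fpow m = (fM * (1 - fps_X)) * fpow (m - 1)"
    by (simp add: algebra_simps)
  then show ?thesis by (simp add: fM_u)
qed


lemma GammaGens_eq: "GammaGens = range tau"
  by (auto simp: GammaGens_def tau_def)

lemma GammaGens_carrier: "GammaGens \<subseteq> carrier BG"
  by (auto simp: GammaGens_eq carrier_BG bij_tau)

lemma NGens_carrier: "NGens \<subseteq> carrier BG"
  by (auto simp: NGens_def carrier_BG bij_alpha)

lemma grp: "group BG" by (rule group_BijGroup)

lemma Gamma_sub: "subgroup Gamma BG"
  unfolding Gamma_def by (rule group.generate_is_subgroup[OF grp GammaGens_carrier])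

lemma NSub_sub: "subgroup NSub BG"
  unfolding NSub_def by (rule group.generate_is_subgroup[OF grp NGens_carrier])

lemma bij_taui: "bij (taui s)"
  using o_bij[OF tau_taui taui_tau] .

lemma invBG_tau: "inv\<^bsub>BG\<^esub> (tau s) = taui s"
  using inv_BG[OF bij_tau] inv_tau by simp

lemma conjBG1: "tau s \<otimes>\<^bsub>BG\<^esub> alphaM h \<otimes>\<^bsub>BG\<^esub> inv\<^bsub>BG\<^esub> (tau s) = alphaM (fM * h)"
proof -
  have b: "bij (tau s \<circ> alphaM h)" using bij_tau bij_alpha bij_comp by blast
  have "tau s \<otimes>\<^bsub>BG\<^esub> alphaM h \<otimes>\<^bsub>BG\<^esub> inv\<^bsub>BG\<^esub> (tau s) = tau s \<circ> alphaM h \<circ> taui s"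
    by (simp only: invBG_tau mult_BG[OF bij_tau bij_alpha] mult_BG[OF b bij_taui])
  then show ?thesis by (simp add: conj1)
qed

lemma conjBG2: "inv\<^bsub>BG\<^esub> (tau s) \<otimes>\<^bsub>BG\<^esub> alphaM h \<otimes>\<^bsub>BG\<^esub> tau s = alphaM ((1 - fps_X) * h)"
proof -
  have b: "bij (taui s \<circ> alphaM h)" using bij_taui bij_alpha bij_comp by blast
  have "inv\<^bsub>BG\<^esub> (tau s) \<otimes>\<^bsub>BG\<^esub> alphaM h \<otimes>\<^bsub>BG\<^esub> tau s = taui s \<circ> alphaM h \<circ> tau s"
    by (simp only: invBG_tau mult_BG[OF bij_taui bij_alpha] mult_BG[OF b bij_tau])
  then show ?thesis by (simp add: conj2)
qed

lemma NGens_conj1: "k \<in> NGens \<Longrightarrow> tau s \<otimes>\<^bsub>BG\<^esub> k \<otimes>\<^bsub>BG\<^esub> inv\<^bsub>BG\<^esub> (tau s) \<in> NGens"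
proof -
  assume "k \<in> NGens"
  then obtain c m where k: "k = alphaM (fps_const c * fpow m)" by (auto simp: NGens_def)
  have eq: "fM * (fps_const c * fpow m) = fps_const c * fpow (m + 1)"
    by (metis mult.left_commute fpow_up)
  show ?thesis unfolding k conjBG1 NGens_def eq by blast
qed

lemma NGens_conj2: "k \<in> NGens \<Longrightarrow> inv\<^bsub>BG\<^esub> (tau s) \<otimes>\<^bsub>BG\<^esub> k \<otimes>\<^bsub>BG\<^esub> tau s \<in> NGens"
proof -
  assume "k \<in> NGens"
  then obtain c m where k: "k = alphaM (fps_const c * fpow m)" by (auto simp: NGens_def)
  have eq: "(1 - fps_X) * (fps_const c * fpow m) = fps_const c * fpow (m - 1)"
    by (metis mult.left_commute fpow_down)
  show ?thesis unfolding k conjBG2 NGens_def eq by blast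
qed

lemma alpha_f: "alphaM fM = tau 1 \<otimes>\<^bsub>BG\<^esub> inv\<^bsub>BG\<^esub> (tau 0)"
proof -
  have "tau 1 \<otimes>\<^bsub>BG\<^esub> inv\<^bsub>BG\<^esub> (tau 0) = tau 1 \<circ> taui 0"
    by (simp only: invBG_tau mult_BG[OF bij_tau bij_taui])
  also have "\<dots> = alphaM fM"
  proof
    fix g
    have "fM * (1 + (1 - fps_X) * g) = fM + (fM * (1 - fps_X)) * g" by (simp add: algebra_simps)
    then show "(tau 1 \<circ> taui 0) g = alphaM fM g" by (simp add: tau_def taui_def alphaM_def fM_u)
  qed
  finally show ?thesis by simp
qed

lemma tau_Gamma: "tau s \<in> Gamma"
  unfolding Gamma_def GammaGens_eq by (rule generate.incl) simp

lemma alpha_fpow_Gamma: "alphaM (fpow m) \<in> Gamma"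
proof (induction m rule: int_induct[where k = 1])
  case base
  have "fpow 1 = fM" by (simp add: fpow_def)
  then have "alphaM (fpow 1) = tau 1 \<otimes>\<^bsub>BG\<^esub> inv\<^bsub>BG\<^esub> (tau 0)" using alpha_f by simp
  also have "\<dots> \<in> Gamma"
    by (intro subgroup.m_closed[OF Gamma_sub] subgroup.m_inv_closed[OF Gamma_sub] tau_Gamma)
  finally show ?case .
next
  case (step1 i)
  then have "tau 0 \<otimes>\<^bsub>BG\<^esub> alphaM (fpow i) \<otimes>\<^bsub>BG\<^esub> inv\<^bsub>BG\<^esub> (tau 0) \<in> Gamma"
    by (intro subgroup.m_closed[OF Gamma_sub] subgroup.m_inv_closed[OF Gamma_sub] tau_Gamma)
  then show ?case by (simp add: conjBG1 fpow_up)
next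
  case (step2 i)
  then have "inv\<^bsub>BG\<^esub> (tau 0) \<otimes>\<^bsub>BG\<^esub> alphaM (fpow i) \<otimes>\<^bsub>BG\<^esub> tau 0 \<in> Gamma"
    by (intro subgroup.m_closed[OF Gamma_sub] subgroup.m_inv_closed[OF Gamma_sub] tau_Gamma)
  then show ?case by (simp add: conjBG2 fpow_down)
qed

lemma NGens_Gamma: "NGens \<subseteq> Gamma"
proof
  fix k assume "k \<in> NGens"
  then obtain c m where k: "k = alphaM (fps_const c * fpow m)" by (auto simp: NGens_def)
  show "k \<in> Gamma"
  proof (cases c)
    case zero
    have "alphaM 0 = \<one>\<^bsub>BG\<^esub>" by (simp add: one_BG alphaM_def id_def)
    then show ?thesis using k zero subgroup.one_closed[OF Gamma_sub] by simp
  next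
    case one
    then show ?thesis using k alpha_fpow_Gamma by simp
  qed
qed

lemma NSub_Gamma: "NSub \<subseteq> Gamma"
  unfolding NSub_def by (rule group.generate_subgroup_incl[OF grp NGens_Gamma Gamma_sub])

theorem proposition8p11:
  shows "NSub \<lhd> (BijGroup (UNIV :: gf2fps set))\<lparr>carrier := Gamma\<rparr>"
proof -
  have gG: "group (BG\<lparr>carrier := Gamma\<rparr>)"
    by (rule subgroup.subgroup_is_group[OF Gamma_sub grp])
  have sub: "subgroup NSub (BG\<lparr>carrier := Gamma\<rparr>)"
    by (rule group.subgroup_incl[OF grp NSub_sub Gamma_sub NSub_Gamma])
  have key: "\<forall>h \<in> NSub. x \<otimes>\<^bsub>BG\<^esub> h \<otimes>\<^bsub>BG\<^esub> inv\<^bsub>BG\<^esub> x \<in> NSub \<and> inv\<^bsub>BG\<^esub> x \<otimes>\<^bsub>BG\<^esub> h \<otimes>\<^bsub>BG\<^esub> x \<in> NSub"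
    if "x \<in> Gamma" for x
    unfolding NSub_def
  proof (rule group.conj_generate2[OF grp GammaGens_carrier NGens_carrier])
    show "x \<in> generate BG GammaGens" using that by (simp add: Gamma_def)
  next
    fix s k assume "s \<in> GammaGens" "k \<in> NGens"
    show "s \<otimes>\<^bsub>BG\<^esub> k \<otimes>\<^bsub>BG\<^esub> inv\<^bsub>BG\<^esub> s \<in> generate BG NGens"
    proof -
      obtain t where "s = tau t" using \<open>s \<in> GammaGens\<close> unfolding GammaGens_eq by blast
      then show ?thesis using generate.incl[OF NGens_conj1[OF \<open>k \<in> NGens\<close>]] by simp
    qed
  next
    fix s k assume "s \<in> GammaGens" "k \<in> NGens"
    show "inv\<^bsub>BG\<^esub> s \<otimes>\<^bsub>BG\<^esub> k \<otimes>\<^bsub>BG\<^esub> s \<in> generate BG NGens"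
    proof -
      obtain t where "s = tau t" using \<open>s \<in> GammaGens\<close> unfolding GammaGens_eq by blast
      then show ?thesis using generate.incl[OF NGens_conj2[OF \<open>k \<in> NGens\<close>]] by simp
    qed
  qed
  show ?thesis
    unfolding group.normal_inv_iff[OF gG]
  proof (intro conjI ballI sub)
    fix x h assume x: "x \<in> carrier (BG\<lparr>carrier := Gamma\<rparr>)" and h: "h \<in> NSub"
    have xG: "x \<in> Gamma" using x by simp
    have ie: "inv\<^bsub>BG\<lparr>carrier := Gamma\<rparr>\<^esub> x = inv\<^bsub>BG\<^esub> x"
      by (rule group.m_inv_consistent[OF grp Gamma_sub xG])
    have m: "\<And>a b. a \<otimes>\<^bsub>BG\<lparr>carrier := Gamma\<rparr>\<^esub> b = a \<otimes>\<^bsub>BG\<^esub> b" by simp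
    have "x \<otimes>\<^bsub>BG\<^esub> h \<otimes>\<^bsub>BG\<^esub> inv\<^bsub>BG\<^esub> x \<in> NSub" using key[OF xG] h by blast
    then show "x \<otimes>\<^bsub>BG\<lparr>carrier := Gamma\<rparr>\<^esub> h \<otimes>\<^bsub>BG\<lparr>carrier := Gamma\<rparr>\<^esub> inv\<^bsub>BG\<lparr>carrier := Gamma\<rparr>\<^esub> x \<in> NSub"
      by (simp only: m ie)
  qed
qed

end
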